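(* Let $f_1,f_2:\mathbb R^d\to\mathbb R$ be convex with $\nabla f_i$ globally Lipschitz continuous with modulus $L_i>0$ ($i=1,2$), let $f_3:\mathbb R^d\to\mathbb R\cup\{+\infty\}$ be proper and lower semicontinuous, and assume $\varphi:=f_1+f_2+f_3$ has a nonempty set of minimizers. Let $\lambda\in(0,2)$, $\underline\alpha:=\frac{2\lambda-3+\sqrt{9-4\lambda}}{2}$, $\alpha\in(\underline\alpha,1)$, and let $\gamma\in\Gamma$. Then for the sequences $(z_1^k,z_2^k)_k$ generated by the relaxed Ryu splitting method there exists $M=M(\gamma)>0$ such that for all $k\ge0$, $$\varphi_\gamma^{\mathrm{Ryu}}(z_1^k,z_2^k)\ge\varphi_\gamma^{\mathrm{Ryu}}(z_1^{k+1},z_2^{k+1})+M\big(\|z_1^{k+1}-z_1^k\|^2+\|z_2^{k+1}-z_2^k\|^2\big).$$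
   Context: For $h:\mathbb R^d\to\mathbb R\cup\{+\infty\}$ and $\gamma>0$, $\mathrm{prox}_{\gamma h}(z):=\operatorname{argmin}_{y}\{h(y)+\frac{1}{2\gamma}\|y-z\|^2\}$. The relaxed Ryu splitting method: given $z_1^0,z_2^0\in\mathbb R^d$, for $k\ge0$, $x_1^k=\mathrm{prox}_{\gamma f_1}(z_1^k)$, $x_2^k=\mathrm{prox}_{\frac{\gamma}{\alpha}f_2}(\frac{z_2^k}{\alpha}+x_1^k)$, $x_3^k\in\mathrm{prox}_{\gamma f_3}(x_1^k-z_1^k+x_2^k-z_2^k)$, $z_1^{k+1}=z_1^k+\lambda(x_3^k-x_1^k)$, $z_2^{k+1}=z_2^k+\lambda(x_3^k-x_2^k)$. Relaxed Ryu envelope: with $\gamma_1=\gamma/\alpha$, $\gamma_2=\gamma/(1-\alpha)$, and for $(z_1,z_2)$, $x_1=\mathrm{prox}_{\gamma f_1}(z_1)$, $x_2=\mathrm{prox}_{\frac{\gamma}{\alpha}f_2}(\frac{z_2}{\alpha}+x_1)$, $\varphi_\gamma^{\mathrm{Ryu}}(z_1,z_2):=\min_{y}\{f_3(y)+\sum_{i=1}^2[f_i(x_i)+\langle y-x_i,\nabla f_i(x_i)\rangle+\frac{1}{2\gamma_i}\|y-x_i\|^2]\}$. Stepsize set: fix $\epsilon_1\in I_1:=\big(\frac{\alpha}{2\alpha-\lambda},\frac{2-\lambda}{1-\alpha}\big)$ and $\epsilon_2\in I_2:=\big(\frac{\alpha L_2}{\lambda},+\infty\big)$, and set $\bar\gamma_0:=\frac{\lambda}{2L_1}$,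 $\bar\gamma_1:=\frac{\lambda}{2L_2}-\frac{\alpha}{2\epsilon_2}$, $\bar\gamma_2:=\frac{\alpha(2-\lambda-(1-\alpha)\epsilon_1)}{\alpha\epsilon_2+2(1-\alpha)L_1}$, $\bar\gamma_3:=\frac{(1-\alpha)(\epsilon_1(2\alpha-\lambda)-\alpha)}{2\alpha L_2\epsilon_1}$, and $\Gamma:=(0,\min\{\bar\gamma_0,\bar\gamma_1\}]\cap\big(0,\min\{\bar\gamma_2,\bar\gamma_3,\frac{1}{L_1+L_2}\}\big)$. *)

theory Defs
  imports "HOL-Analysis.Analysis"
begin

definition proper_fun :: "('a \<Rightarrow> ereal) \<Rightarrow> bool" where
  "proper_fun h \<longleftrightarrow> (\<forall>x. h x \<noteq> -\<infinity>) \<and> (\<exists>x. h x \<noteq> \<infinity>)"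

definition lsc_fun :: "('a::topological_space \<Rightarrow> ereal) \<Rightarrow> bool" where
  "lsc_fun h \<longleftrightarrow> (\<forall>x. h x \<le> Liminf (at x) h)"

definition prox_set :: "('a::real_normed_vector \<Rightarrow> ereal) \<Rightarrow> real \<Rightarrow> 'a \<Rightarrow> 'a set" where
  "prox_set h \<gamma> z = {y. \<forall>u. h y + ereal ((norm (y - z))\<^sup>2 / (2 * \<gamma>))
                              \<le> h u + ereal ((norm (u - z))\<^sup>2 / (2 * \<gamma>))}"

(* single-valued proximal map (used for real-valued convex functions, where the argmin is unique) *)
definition prox :: "('a::real_normed_vector \<Rightarrow> real) \<Rightarrow> real \<Rightarrow> 'a \<Rightarrow> 'a" where
  "prox h \<gamma> z = (THE y. y \<in> prox_set (\<lambda>x. ereal (h x)) \<gamma> z)"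

(* relaxed Ryu envelope; g1, g2 are the gradients of f1, f2 *)
definition ryu_envelope ::
  "('a::real_inner \<Rightarrow> real) \<Rightarrow> ('a \<Rightarrow> 'a) \<Rightarrow> ('a \<Rightarrow> real) \<Rightarrow> ('a \<Rightarrow> 'a) \<Rightarrow> ('a \<Rightarrow> ereal)
    \<Rightarrow> real \<Rightarrow> real \<Rightarrow> 'a \<Rightarrow> 'a \<Rightarrow> ereal" where
  "ryu_envelope f1 g1 f2 g2 f3 \<alpha> \<gamma> z1 z2 =
     (let \<gamma>1 = \<gamma> / \<alpha>; \<gamma>2 = \<gamma> / (1 - \<alpha>);
          x1 = prox f1 \<gamma> z1;
          x2 = prox f2 (\<gamma> / \<alpha>) (z2 /\<^sub>R \<alpha> + x1)
      in (INF y. f3 y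
            + ereal (f1 x1 + inner (y - x1) (g1 x1) + (norm (y - x1))\<^sup>2 / (2 * \<gamma>1))
            + ereal (f2 x2 + inner (y - x2) (g2 x2) + (norm (y - x2))\<^sup>2 / (2 * \<gamma>2))))"

definition ryu_Gamma :: "real \<Rightarrow> real \<Rightarrow> real \<Rightarrow> real \<Rightarrow> real \<Rightarrow> real \<Rightarrow> real set" where
  "ryu_Gamma lam \<alpha> L1 L2 \<epsilon>1 \<epsilon>2 =
     (let g0 = lam / (2 * L1);
          g1 = lam / (2 * L2) - \<alpha> / (2 * \<epsilon>2);
          g2 = \<alpha> * (2 - lam - (1 - \<alpha>) * \<epsilon>1) / (\<alpha> * \<epsilon>2 + 2 * (1 - \<alpha>) * L1);
          g3 = (1 - \<alpha>) * (\<epsilon>1 * (2 * \<alpha> - lam) - \<alpha>) / (2 * \<alpha> * L2 * \<epsilon>1)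
      in {0<..min g0 g1} \<inter> {0<..<min (min g2 g3) (1 / (L1 + L2))})"

end

theory Submission
  imports Defs
begin


lemma line_deriv:
  fixes f :: "'a::real_inner \<Rightarrow> real"
  assumes grad: "\<And>x. (f has_derivative (\<lambda>h. inner (g x) h)) (at x)"
  shows "((\<lambda>t. f (x + t *\<^sub>R d)) has_real_derivative inner (g (x + t *\<^sub>R d)) d) (at t)"
proof -
  have "((\<lambda>t. x + t *\<^sub>R d) has_derivative (\<lambda>h. h *\<^sub>R d)) (at t)"
    by (auto intro!: derivative_eq_intros)
  from has_derivative_compose[OF this grad]
  have "((\<lambda>t. f (x + t *\<^sub>R d)) has_derivative (\<lambda>h. inner (g (x + t *\<^sub>R d)) (h *\<^sub>R d))) (at t)" .
  moreover have "(\<lambda>h. inner (g (x + t *\<^sub>R d)) (h *\<^sub>R d)) = (\<lambda>h. inner (g (x + t *\<^sub>R d)) d * h)"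
    by (auto simp: algebra_simps)
  ultimately show ?thesis by (simp add: has_field_derivative_def)
qed

lemma grad_ineq:
  fixes f :: "'a::real_inner \<Rightarrow> real"
  assumes conv: "convex_on UNIV f"
    and grad: "\<And>x. (f has_derivative (\<lambda>h. inner (g x) h)) (at x)"
  shows "f y \<ge> f x + inner (g x) (y - x)"
proof -
  let ?p = "\<lambda>t. f (x + t *\<^sub>R (y - x))"
  have cp: "convex_on UNIV ?p"
  proof (rule convex_onI)
    fix t u a :: real assume a: "0 < a" "a < 1"
    have eq: "x + ((1 - a) *\<^sub>R t + a *\<^sub>R u) *\<^sub>R (y - x) = (1 - a) *\<^sub>R (x + t *\<^sub>R (y - x)) + a *\<^sub>R (x + u *\<^sub>R (y - x))"
      by (simp add: algebra_simps)
    have "?p ((1 - a) *\<^sub>R t + a *\<^sub>R u) = f ((1 - a) *\<^sub>R (x + t *\<^sub>R (y - x)) + a *\<^sub>R (x + u *\<^sub>R (y - x)))"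
      by (simp only: eq)
    also have "\<dots> \<le> (1 - a) * ?p t + a * ?p u"
      using convex_onD[OF conv, of a "x + t *\<^sub>R (y - x)" "x + u *\<^sub>R (y - x)"] a by simp
    finally show "?p ((1 - a) *\<^sub>R t + a *\<^sub>R u) \<le> (1 - a) * ?p t + a * ?p u" .
  qed simp
  have d: "(?p has_field_derivative inner (g x) (y - x)) (at 0 within UNIV)"
    using line_deriv[OF grad, of x "y - x" 0] by simp
  have "?p 1 - ?p 0 \<ge> inner (g x) (y - x) * (1 - 0)"
    by (rule convex_on_imp_above_tangent[OF cp _ _ _ d]) auto
  then show ?thesis by (simp add: algebra_simps)
qed

lemma descent:
  fixes f :: "'a::real_inner \<Rightarrow> real"
  assumes grad: "\<And>x. (f has_derivative (\<lambda>h. inner (g x) h)) (at x)"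
    and lip: "L-lipschitz_on UNIV g"
  shows "f y \<le> f x + inner (g x) (y - x) + L / 2 * (norm (y - x))\<^sup>2"
proof -
  define d where "d = y - x"
  let ?p = "\<lambda>t. f (x + t *\<^sub>R d) - t * inner (g x) d - L / 2 * t\<^sup>2 * (norm d)\<^sup>2"
  have "?p 1 \<le> ?p 0"
  proof (rule DERIV_nonpos_imp_nonincreasing[where f = ?p and a = 0 and b = 1])
    fix t :: real assume t: "0 \<le> t" "t \<le> 1"
    have D: "(?p has_real_derivative (inner (g (x + t *\<^sub>R d)) d - inner (g x) d - L * t * (norm d)\<^sup>2)) (at t)"
      by (rule derivative_eq_intros line_deriv[OF grad] | simp)+
    have "inner (g (x + t *\<^sub>R d)) d - inner (g x) d = inner (g (x + t *\<^sub>R d) - g x) d"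
      by (simp add: inner_diff_left)
    also have "\<dots> \<le> norm (g (x + t *\<^sub>R d) - g x) * norm d" by (rule norm_cauchy_schwarz)
    also have "\<dots> \<le> L * norm (t *\<^sub>R d) * norm d"
      using lipschitz_onD[OF lip, of "x + t *\<^sub>R d" x] by (simp add: dist_norm mult_right_mono)
    also have "\<dots> = L * t * (norm d)\<^sup>2" using t by (simp add: power2_eq_square)
    finally have le: "inner (g (x + t *\<^sub>R d)) d - inner (g x) d \<le> L * t * (norm d)\<^sup>2" .
    have le2: "inner (g (x + t *\<^sub>R d)) d - inner (g x) d - L * t * (norm d)\<^sup>2 \<le> 0"
      using le by linarith
    show "\<exists>y. (?p has_real_derivative y) (at t) \<and> y \<le> 0"
      using D le2 by blast
  qed simp
  then show ?thesis by (simp add: d_def)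
qed

lemma cocoercive:
  fixes f :: "'a::real_inner \<Rightarrow> real"
  assumes conv: "convex_on UNIV f"
    and grad: "\<And>x. (f has_derivative (\<lambda>h. inner (g x) h)) (at x)"
    and lip: "L-lipschitz_on UNIV g" and L: "L > 0"
  shows "f y \<ge> f x + inner (g x) (y - x) + (norm (g y - g x))\<^sup>2 / (2 * L)"
proof -
  define w where "w = y - (1 / L) *\<^sub>R (g y - g x)"
  have a: "f w \<ge> f x + inner (g x) (w - x)" by (rule grad_ineq[OF conv grad])
  have b: "f w \<le> f y + inner (g y) (w - y) + L / 2 * (norm (w - y))\<^sup>2" by (rule descent[OF grad lip])
  have e1: "inner (g x) (w - x) = inner (g x) (y - x) + inner (g x) (w - y)"
    by (simp add: inner_diff_right)
  have e2: "inner (g y) (w - y) - inner (g x) (w - y) = - (norm (g y - g x))\<^sup>2 / L"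
    using L by (simp add: w_def inner_diff_left inner_diff_right power2_norm_eq_inner inner_commute field_simps)
  have nw: "norm (w - y) = norm (g y - g x) / L"
    using L by (simp add: w_def)
  have e3: "L / 2 * (norm (w - y))\<^sup>2 = (norm (g y - g x))\<^sup>2 / (2 * L)"
    unfolding nw using L by (simp add: power2_eq_square field_simps)
  have e4: "- (norm (g y - g x))\<^sup>2 / L + (norm (g y - g x))\<^sup>2 / (2 * L) = - ((norm (g y - g x))\<^sup>2 / (2 * L))"
    using L by (simp add: field_simps)
  show ?thesis using a b e1 e2 e3 e4 by linarith
qed

lemma monotone_grad:
  fixes f :: "'a::real_inner \<Rightarrow> real"
  assumes conv: "convex_on UNIV f"
    and grad: "\<And>x. (f has_derivative (\<lambda>h. inner (g x) h)) (at x)"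
  shows "inner (g y - g x) (y - x) \<ge> 0"
proof -
  have "f y \<ge> f x + inner (g x) (y - x)" by (rule grad_ineq[OF conv grad])
  moreover have "f x \<ge> f y + inner (g y) (x - y)" by (rule grad_ineq[OF conv grad])
  moreover have "inner (g y) (x - y) = - inner (g y) (y - x)" by (simp add: inner_diff_right)
  ultimately show ?thesis by (simp add: inner_diff_left)
qed

lemma prox_opt:
  fixes f :: "'a::real_inner \<Rightarrow> real"
  assumes grad: "\<And>x. (f has_derivative (\<lambda>h. inner (g x) h)) (at x)"
    and c: "c > 0"
    and min: "\<And>u. f x + (norm (x - z))\<^sup>2 / (2 * c) \<le> f u + (norm (u - z))\<^sup>2 / (2 * c)"
  shows "c *\<^sub>R g x = z - x"
proof -
  let ?H = "\<lambda>w. f w + inner (w - z) (w - z) / (2 * c)"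
  have D: "(?H has_derivative (\<lambda>h. inner (g x) h + (inner h (x - z) + inner (x - z) h) / (2 * c))) (at x)"
    using c by (auto intro!: derivative_eq_intros grad simp: field_simps)
  have "\<forall>\<^sub>F y in at x. ?H x \<le> ?H y"
    using min by (simp add: power2_norm_eq_inner)
  from has_derivative_local_min[OF D this]
  have Z: "\<And>h. inner (g x) h + (inner h (x - z) + inner (x - z) h) / (2 * c) = 0" by meson
  define v where "v = c *\<^sub>R g x + (x - z)"
  have vv: "inner v v = inner (c *\<^sub>R g x + (x - z)) v" by (simp only: v_def)
  also have "\<dots> = c * inner (g x) v + inner (x - z) v" by (simp only: inner_add_left inner_scaleR_left)
  finally have vv: "inner v v = c * inner (g x) v + inner (x - z) v" .
  have "inner (g x) v + inner (x - z) v / c = 0" using Z[of v] by (simp add: inner_commute)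
  then have "c * inner (g x) v + inner (x - z) v = 0" using c by (simp add: field_simps)
  with vv have "inner v v = 0" by simp
  then have "v = 0" by simp
  then show ?thesis by (simp add: v_def algebra_simps)
qed

lemma prox_exists:
  fixes f :: "'a::euclidean_space \<Rightarrow> real"
  assumes conv: "convex_on UNIV f"
    and grad: "\<And>x. (f has_derivative (\<lambda>h. inner (g x) h)) (at x)"
    and c: "c > 0"
  shows "\<exists>x. \<forall>u. f x + (norm (x - z))\<^sup>2 / (2 * c) \<le> f u + (norm (u - z))\<^sup>2 / (2 * c)"
proof -
  let ?H = "\<lambda>w. f w + (norm (w - z))\<^sup>2 / (2 * c)"
  define R where "R = 2 * c * norm (g z)"
  have cont: "continuous_on (cball z R) ?H"
  proof (intro continuous_at_imp_continuous_on ballI)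
    fix w
    have "isCont f w" using grad[of w] by (rule has_derivative_continuous)
    then show "isCont ?H w" using c by (intro continuous_intros) auto
  qed
  have ne: "cball z R \<noteq> {}" using c by (simp add: R_def not_less)
  obtain x where xin: "x \<in> cball z R" and xm: "\<And>y. y \<in> cball z R \<Longrightarrow> ?H x \<le> ?H y"
    using continuous_attains_inf[OF compact_cball ne cont] by blast
  have "?H x \<le> ?H u" for u
  proof (cases "u \<in> cball z R")
    case True then show ?thesis using xm by blast
  next
    case False
    then have r: "norm (u - z) > R" by (simp add: dist_norm norm_minus_commute)
    have "z \<in> cball z R" using c by (simp add: R_def)
    then have "?H x \<le> ?H z" using xm by blast
    also have "\<dots> = f z" by simp
    also have "f z \<le> ?H u"
    proof -
      have gi: "f u \<ge> f z + inner (g z) (u - z)" by (rule grad_ineq[OF conv grad])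
      have cs: "inner (g z) (u - z) \<ge> - (norm (g z) * norm (u - z))"
        using norm_cauchy_schwarz[of "- g z" "u - z"] by simp
      have "norm (g z) * norm (u - z) \<le> (norm (u - z))\<^sup>2 / (2 * c)"
      proof -
        have "2 * c * norm (g z) \<le> norm (u - z)" using r by (simp add: R_def)
        then have "2 * c * norm (g z) * norm (u - z) \<le> norm (u - z) * norm (u - z)"
          by (simp add: mult_right_mono)
        then show ?thesis using c by (simp add: field_simps power2_eq_square)
      qed
      then show ?thesis using gi cs by linarith
    qed
    finally show ?thesis .
  qed
  then show ?thesis by blast
qed

lemma prox_eq:
  fixes f :: "'a::euclidean_space \<Rightarrow> real"
  assumes conv: "convex_on UNIV f"
    and grad: "\<And>x. (f has_derivative (\<lambda>h. inner (g x) h)) (at x)"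
    and c: "c > 0"
  shows "c *\<^sub>R g (prox f c z) = z - prox f c z"
proof -
  have mem: "y \<in> prox_set (\<lambda>x. ereal (f x)) c z \<longleftrightarrow>
     (\<forall>u. f y + (norm (y - z))\<^sup>2 / (2 * c) \<le> f u + (norm (u - z))\<^sup>2 / (2 * c))" for y
    by (simp add: prox_set_def)
  obtain x where x: "\<forall>u. f x + (norm (x - z))\<^sup>2 / (2 * c) \<le> f u + (norm (u - z))\<^sup>2 / (2 * c)"
    using prox_exists[OF conv grad c] by blast
  have ox: "c *\<^sub>R g x = z - x" using prox_opt[OF grad c] x by blast
  have "prox f c z = x"
    unfolding prox_def
  proof (rule the_equality)
    show "x \<in> prox_set (\<lambda>x. ereal (f x)) c z" using x mem by blast
  next
    fix y assume "y \<in> prox_set (\<lambda>x. ereal (f x)) c z"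
    then have "\<forall>u. f y + (norm (y - z))\<^sup>2 / (2 * c) \<le> f u + (norm (u - z))\<^sup>2 / (2 * c)"
      using mem by blast
    then have oy: "c *\<^sub>R g y = z - y" using prox_opt[OF grad c] by blast
    have m: "inner (g y - g x) (y - x) \<ge> 0" by (rule monotone_grad[OF conv grad])
    have "c *\<^sub>R (g y - g x) = - (y - x)" using ox oy by (simp add: algebra_simps)
    then have "c * inner (g y - g x) (y - x) = - inner (y - x) (y - x)"
      by (metis inner_minus_left inner_scaleR_left)
    then have "inner (y - x) (y - x) \<le> 0" using m c
      by (smt (verit) mult_nonneg_nonneg)
    then have "inner (y - x) (y - x) = 0" by (meson antisym inner_ge_zero)
    then show "y = x" by simp
  qed
  then show ?thesis using ox by simp
qed



lemma scalar_bound: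
  fixes lam \<alpha> \<gamma> \<epsilon>1 \<epsilon>2 L1 L2 B1 B2 p11 p22 i12 j1 j2 k12 h1 h2 :: real
  assumes pos: "lam > 0" "\<gamma> > 0" "0 < \<alpha>" "\<alpha> < 1" "\<epsilon>1 > 0" "\<epsilon>2 > 0" "L1 > 0" "L2 > 0"
    and g0: "\<gamma> \<le> lam / (2 * L1)" and g1: "\<gamma> \<le> lam / (2 * L2) - \<alpha> / (2 * \<epsilon>2)"
    and B1: "B1 \<ge> h1 / (2 * L1)" and B2: "B2 \<ge> h2 / (2 * L2)"
    and h: "h1 \<ge> 0" "h2 \<ge> 0"
    and j1: "j1 \<le> L1 * p11" and j2: "j2 \<ge> 0" "j2 \<le> L2 * p22"
    and y1: "\<epsilon>1 * p11 - 2 * i12 + p22 / \<epsilon>1 \<ge> 0"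
    and y2: "\<epsilon>2 * p11 + 2 * k12 + h2 / \<epsilon>2 \<ge> 0"
  shows "lam * B1 + lam * B2 + \<alpha> * (2 - lam) / (2 * \<gamma>) * p11 - (1 - \<alpha>) * j1 - \<gamma> * h1
          + (1 - 2 * \<alpha>) * j2 + \<alpha> * k12 - \<gamma> * h2 + (1 - \<alpha>) * (2 * \<alpha> - lam) / (2 * \<gamma>) * p22
          - (1 - \<alpha>) * \<alpha> / \<gamma> * i12
        \<ge> (\<alpha> * (2 - lam) / (2 * \<gamma>) - (1 - \<alpha>) * \<alpha> * \<epsilon>1 / (2 * \<gamma>) - (1 - \<alpha>) * L1 - \<alpha> * \<epsilon>2 / 2) * p11
          + ((1 - \<alpha>) * (2 * \<alpha> - lam) / (2 * \<gamma>) - (1 - \<alpha>) * \<alpha> / (2 * \<gamma> * \<epsilon>1) - \<alpha> * L2) * p22"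
proof -
  define X1 where "X1 = lam * B1 - \<gamma> * h1"
  define X2 where "X2 = lam * B2 - \<gamma> * h2 - \<alpha> / (2 * \<epsilon>2) * h2"
  define X3 where "X3 = (1 - \<alpha>) * (L1 * p11 - j1)"
  define X4 where "X4 = (1 - \<alpha>) * j2 + \<alpha> * (L2 * p22 - j2)"
  define X5 where "X5 = (\<alpha> / 2) * (\<epsilon>2 * p11 + 2 * k12 + h2 / \<epsilon>2)"
  define X6 where "X6 = ((1 - \<alpha>) * \<alpha> / (2 * \<gamma>)) * (\<epsilon>1 * p11 - 2 * i12 + p22 / \<epsilon>1)"
  have x1: "X1 \<ge> 0"
  proof -
    have "lam * B1 \<ge> lam * (h1 / (2 * L1))" using B1 pos(1) by (intro mult_left_mono) auto
    moreover have "\<gamma> * h1 \<le> lam / (2 * L1) * h1" using g0 h by (intro mult_right_mono) auto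
    ultimately show ?thesis unfolding X1_def by simp
  qed
  have x2: "X2 \<ge> 0"
  proof -
    have "lam * B2 \<ge> lam * (h2 / (2 * L2))" using B2 pos(1) by (intro mult_left_mono) auto
    moreover have "(\<gamma> + \<alpha> / (2 * \<epsilon>2)) * h2 \<le> lam / (2 * L2) * h2" using g1 h by (intro mult_right_mono) auto
    ultimately show ?thesis unfolding X2_def by (simp add: algebra_simps)
  qed
  have x3: "X3 \<ge> 0" unfolding X3_def using pos j1 by simp
  have x4: "X4 \<ge> 0" unfolding X4_def using pos j2 by simp
  have x5: "X5 \<ge> 0" unfolding X5_def using pos y2 by simp
  have x6: "X6 \<ge> 0" unfolding X6_def using pos y1 by simp
  have eq: "lam * B1 + lam * B2 + \<alpha> * (2 - lam) / (2 * \<gamma>) * p11 - (1 - \<alpha>) * j1 - \<gamma> * h1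
          + (1 - 2 * \<alpha>) * j2 + \<alpha> * k12 - \<gamma> * h2 + (1 - \<alpha>) * (2 * \<alpha> - lam) / (2 * \<gamma>) * p22
          - (1 - \<alpha>) * \<alpha> / \<gamma> * i12
        - ((\<alpha> * (2 - lam) / (2 * \<gamma>) - (1 - \<alpha>) * \<alpha> * \<epsilon>1 / (2 * \<gamma>) - (1 - \<alpha>) * L1 - \<alpha> * \<epsilon>2 / 2) * p11
          + ((1 - \<alpha>) * (2 * \<alpha> - lam) / (2 * \<gamma>) - (1 - \<alpha>) * \<alpha> / (2 * \<gamma> * \<epsilon>1) - \<alpha> * L2) * p22)
        = X1 + X2 + X3 + X4 + X5 + X6"
    unfolding X1_def X2_def X3_def X4_def X5_def X6_def using pos
    by (simp add: field_simps)
  show ?thesis using eq x1 x2 x3 x4 x5 x6 by linarith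
qed

lemma norm_add_sq_le: "(norm (a + b))\<^sup>2 \<le> 2 * (norm a)\<^sup>2 + 2 * (norm (b::'a::real_inner))\<^sup>2"
proof -
  have "0 \<le> (norm (a - b))\<^sup>2" by simp
  then show ?thesis
    by (simp add: power2_norm_eq_inner inner_add_left inner_add_right inner_diff_left inner_diff_right inner_commute)
qed

lemma key:
  fixes x1 x2 x1' x2' y g1 g2 g1' g2' z1 z2 z1' z2' :: "'a::real_inner"
    and F1 F2 F1' F2' lam \<alpha> \<gamma> \<epsilon>1 \<epsilon>2 L1 L2 :: real
  assumes pos: "lam > 0" "\<gamma> > 0" "0 < \<alpha>" "\<alpha> < 1" "\<epsilon>1 > 0" "\<epsilon>2 > 0" "L1 > 0" "L2 > 0"
    and g0: "\<gamma> \<le> lam / (2 * L1)" and g1: "\<gamma> \<le> lam / (2 * L2) - \<alpha> / (2 * \<epsilon>2)"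
    and c1: "\<alpha> * (2 - lam) / (2 * \<gamma>) - (1 - \<alpha>) * \<alpha> * \<epsilon>1 / (2 * \<gamma>) - (1 - \<alpha>) * L1 - \<alpha> * \<epsilon>2 / 2 > 0"
    and c2: "(1 - \<alpha>) * (2 * \<alpha> - lam) / (2 * \<gamma>) - (1 - \<alpha>) * \<alpha> / (2 * \<gamma> * \<epsilon>1) - \<alpha> * L2 > 0"
    and o1: "\<gamma> *\<^sub>R g1 = z1 - x1" "\<gamma> *\<^sub>R g1' = z1' - x1'"
    and o2: "\<gamma> *\<^sub>R g2 = z2 + \<alpha> *\<^sub>R x1 - \<alpha> *\<^sub>R x2" "\<gamma> *\<^sub>R g2' = z2' + \<alpha> *\<^sub>R x1' - \<alpha> *\<^sub>R x2'"
    and zs: "z1' = z1 + lam *\<^sub>R (y - x1)" "z2' = z2 + lam *\<^sub>R (y - x2)"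
    and cc1: "F1 \<ge> F1' + inner g1' (x1 - x1') + (norm (g1 - g1'))\<^sup>2 / (2 * L1)"
    and cc2: "F2 \<ge> F2' + inner g2' (x2 - x2') + (norm (g2 - g2'))\<^sup>2 / (2 * L2)"
    and lp1: "norm (g1' - g1) \<le> L1 * norm (x1' - x1)"
    and lp2: "norm (g2' - g2) \<le> L2 * norm (x2' - x2)"
    and mono2: "inner (g2' - g2) (x2' - x2) \<ge> 0"
  shows "(F1 + inner (y - x1) g1 + (norm (y - x1))\<^sup>2 / (2 * (\<gamma> / \<alpha>))
          + (F2 + inner (y - x2) g2 + (norm (y - x2))\<^sup>2 / (2 * (\<gamma> / (1 - \<alpha>)))))
       - (F1' + inner (y - x1') g1' + (norm (y - x1'))\<^sup>2 / (2 * (\<gamma> / \<alpha>))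
          + (F2' + inner (y - x2') g2' + (norm (y - x2'))\<^sup>2 / (2 * (\<gamma> / (1 - \<alpha>)))))
     \<ge> min (\<alpha> * (2 - lam) / (2 * \<gamma>) - (1 - \<alpha>) * \<alpha> * \<epsilon>1 / (2 * \<gamma>) - (1 - \<alpha>) * L1 - \<alpha> * \<epsilon>2 / 2)
             ((1 - \<alpha>) * (2 * \<alpha> - lam) / (2 * \<gamma>) - (1 - \<alpha>) * \<alpha> / (2 * \<gamma> * \<epsilon>1) - \<alpha> * L2)
         / (lam * (2 + 2 * \<gamma>\<^sup>2 * L1\<^sup>2 + 4 * \<alpha>\<^sup>2 + 2 * \<gamma>\<^sup>2 * L2\<^sup>2))
         * ((norm (z1' - z1))\<^sup>2 + (norm (z2' - z2))\<^sup>2)"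
proof -
  define u1 where "u1 = x1' - x1"
  define u2 where "u2 = x2' - x2"
  define d1 where "d1 = g1' - g1"
  define d2 where "d2 = g2' - g2"
  define v1 where "v1 = y - x1"
  define v2 where "v2 = y - x2"
  have lv1: "lam *\<^sub>R v1 = u1 + \<gamma> *\<^sub>R d1"
  proof -
    have "lam *\<^sub>R v1 = z1' - z1" using zs by (simp add: v1_def)
    also have "\<dots> = (x1' + \<gamma> *\<^sub>R g1') - (x1 + \<gamma> *\<^sub>R g1)" using o1 by (simp add: algebra_simps)
    also have "\<dots> = u1 + \<gamma> *\<^sub>R d1" by (simp add: u1_def d1_def algebra_simps)
    finally show ?thesis .
  qed
  have lv2: "lam *\<^sub>R v2 = \<alpha> *\<^sub>R (u2 - u1) + \<gamma> *\<^sub>R d2"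
  proof -
    have "lam *\<^sub>R v2 = z2' - z2" using zs by (simp add: v2_def)
    also have "\<dots> = (\<gamma> *\<^sub>R g2' - \<alpha> *\<^sub>R x1' + \<alpha> *\<^sub>R x2') - (\<gamma> *\<^sub>R g2 - \<alpha> *\<^sub>R x1 + \<alpha> *\<^sub>R x2)"
      using o2 by (simp add: algebra_simps)
    also have "\<dots> = \<alpha> *\<^sub>R (u2 - u1) + \<gamma> *\<^sub>R d2" by (simp add: u1_def u2_def d2_def algebra_simps)
    finally show ?thesis .
  qed
  define p11 where "p11 = inner u1 u1"
  define p22 where "p22 = inner u2 u2"
  define i12 where "i12 = inner u1 u2"
  define j1 where "j1 = inner u1 d1"
  define j2 where "j2 = inner u2 d2"
  define k12 where "k12 = inner u1 d2"
  define h1 where "h1 = inner d1 d1"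
  define h2 where "h2 = inner d2 d2"
  have s1: "lam * inner v1 d1 = j1 + \<gamma> * h1"
    using arg_cong[OF lv1, of "\<lambda>w. inner w d1"] by (simp add: j1_def h1_def inner_add_left)
  have s2: "lam * inner v1 u1 = p11 + \<gamma> * j1"
    using arg_cong[OF lv1, of "\<lambda>w. inner w u1"] by (simp add: j1_def p11_def inner_add_left inner_commute[of d1 u1])
  have s3: "lam * inner v2 d2 = \<alpha> * j2 - \<alpha> * k12 + \<gamma> * h2"
    using arg_cong[OF lv2, of "\<lambda>w. inner w d2"]
    by (simp add: j2_def k12_def h2_def inner_add_left inner_diff_left algebra_simps)
  have s4: "lam * inner v2 u2 = \<alpha> * p22 - \<alpha> * i12 + \<gamma> * j2"
    using arg_cong[OF lv2, of "\<lambda>w. inner w u2"]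
    by (simp add: j2_def i12_def p22_def inner_add_left inner_diff_left algebra_simps inner_commute[of d2 u2])
  define BB1 where "BB1 = F1 - F1' + inner u1 g1'"
  define BB2 where "BB2 = F2 - F2' + inner u2 g2'"
  have e1: "inner (y - x1) g1 - inner (y - x1') g1' = - inner v1 d1 + inner u1 g1'"
    by (simp add: u1_def v1_def d1_def inner_diff_left inner_diff_right)
  have e2: "inner (y - x2) g2 - inner (y - x2') g2' = - inner v2 d2 + inner u2 g2'"
    by (simp add: u2_def v2_def d2_def inner_diff_left inner_diff_right)
  have n1: "(norm (y - x1))\<^sup>2 - (norm (y - x1'))\<^sup>2 = 2 * inner v1 u1 - p11"
  proof -
    have "y - x1' = v1 - u1" by (simp add: u1_def v1_def)
    then show ?thesis
      by (simp add: v1_def[symmetric] p11_def power2_norm_eq_inner inner_diff_left inner_diff_right inner_commute)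
  qed
  have n2: "(norm (y - x2))\<^sup>2 - (norm (y - x2'))\<^sup>2 = 2 * inner v2 u2 - p22"
  proof -
    have "y - x2' = v2 - u2" by (simp add: u2_def v2_def)
    then show ?thesis
      by (simp add: v2_def[symmetric] p22_def power2_norm_eq_inner inner_diff_left inner_diff_right inner_commute)
  qed
  define LHS where "LHS = (F1 + inner (y - x1) g1 + (norm (y - x1))\<^sup>2 / (2 * (\<gamma> / \<alpha>))
          + (F2 + inner (y - x2) g2 + (norm (y - x2))\<^sup>2 / (2 * (\<gamma> / (1 - \<alpha>)))))
       - (F1' + inner (y - x1') g1' + (norm (y - x1'))\<^sup>2 / (2 * (\<gamma> / \<alpha>))
          + (F2' + inner (y - x2') g2' + (norm (y - x2'))\<^sup>2 / (2 * (\<gamma> / (1 - \<alpha>)))))"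
  have L1eq: "LHS = BB1 + BB2 - inner v1 d1 + \<alpha> / (2 * \<gamma>) * (2 * inner v1 u1 - p11)
                 - inner v2 d2 + (1 - \<alpha>) / (2 * \<gamma>) * (2 * inner v2 u2 - p22)"
  proof -
    have "LHS = (F1 - F1') + (F2 - F2') + (inner (y - x1) g1 - inner (y - x1') g1')
          + (inner (y - x2) g2 - inner (y - x2') g2')
          + \<alpha> / (2 * \<gamma>) * ((norm (y - x1))\<^sup>2 - (norm (y - x1'))\<^sup>2)
          + (1 - \<alpha>) / (2 * \<gamma>) * ((norm (y - x2))\<^sup>2 - (norm (y - x2'))\<^sup>2)"
      unfolding LHS_def using pos by (simp add: field_simps)
    then show ?thesis unfolding e1 e2 n1 n2 BB1_def BB2_def by simp
  qed
  have L2eq: "lam * LHS = lam * BB1 + lam * BB2 + \<alpha> * (2 - lam) / (2 * \<gamma>) * p11 - (1 - \<alpha>) * j1 - \<gamma> * h1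
          + (1 - 2 * \<alpha>) * j2 + \<alpha> * k12 - \<gamma> * h2 + (1 - \<alpha>) * (2 * \<alpha> - lam) / (2 * \<gamma>) * p22
          - (1 - \<alpha>) * \<alpha> / \<gamma> * i12"
  proof -
    have "lam * LHS = lam * BB1 + lam * BB2 - lam * inner v1 d1 + \<alpha> / (2 * \<gamma>) * (2 * (lam * inner v1 u1) - lam * p11)
                 - lam * inner v2 d2 + (1 - \<alpha>) / (2 * \<gamma>) * (2 * (lam * inner v2 u2) - lam * p22)"
      unfolding L1eq using pos by (simp add: field_simps)
    also have "\<dots> = lam * BB1 + lam * BB2 - (j1 + \<gamma> * h1) + \<alpha> / (2 * \<gamma>) * (2 * (p11 + \<gamma> * j1) - lam * p11)
                 - (\<alpha> * j2 - \<alpha> * k12 + \<gamma> * h2) + (1 - \<alpha>) / (2 * \<gamma>) * (2 * (\<alpha> * p22 - \<alpha> * i12 + \<gamma> * j2) - lam * p22)"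
      unfolding s1 s2 s3 s4 ..
    also have "\<dots> = lam * BB1 + lam * BB2 + \<alpha> * (2 - lam) / (2 * \<gamma>) * p11 - (1 - \<alpha>) * j1 - \<gamma> * h1
          + (1 - 2 * \<alpha>) * j2 + \<alpha> * k12 - \<gamma> * h2 + (1 - \<alpha>) * (2 * \<alpha> - lam) / (2 * \<gamma>) * p22
          - (1 - \<alpha>) * \<alpha> / \<gamma> * i12"
      using pos by (simp add: field_simps)
    finally show ?thesis .
  qed
  have h1: "h1 \<ge> 0" "h2 \<ge> 0" unfolding h1_def h2_def by simp_all
  have nu1: "norm d1 \<le> L1 * norm u1" using lp1 by (simp add: d1_def u1_def)
  have nu2: "norm d2 \<le> L2 * norm u2" using lp2 by (simp add: d2_def u2_def)
  have pn: "p11 = (norm u1)\<^sup>2" "p22 = (norm u2)\<^sup>2" "h1 = (norm d1)\<^sup>2" "h2 = (norm d2)\<^sup>2"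
    by (simp_all add: p11_def p22_def h1_def h2_def power2_norm_eq_inner)
  have hj1: "j1 \<le> L1 * p11"
  proof -
    have "j1 \<le> norm u1 * norm d1" unfolding j1_def by (rule norm_cauchy_schwarz)
    also have "\<dots> \<le> norm u1 * (L1 * norm u1)" using nu1 by (simp add: mult_left_mono)
    finally show ?thesis by (simp add: pn power2_eq_square algebra_simps)
  qed
  have hj2: "j2 \<le> L2 * p22"
  proof -
    have "j2 \<le> norm u2 * norm d2" unfolding j2_def by (rule norm_cauchy_schwarz)
    also have "\<dots> \<le> norm u2 * (L2 * norm u2)" using nu2 by (simp add: mult_left_mono)
    finally show ?thesis by (simp add: pn power2_eq_square algebra_simps)
  qed
  have hj2': "j2 \<ge> 0" using mono2 by (simp add: j2_def u2_def d2_def inner_commute)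
  have hy1: "\<epsilon>1 * p11 - 2 * i12 + p22 / \<epsilon>1 \<ge> 0"
  proof -
    have "0 \<le> inner (\<epsilon>1 *\<^sub>R u1 - u2) (\<epsilon>1 *\<^sub>R u1 - u2)" by simp
    also have "\<dots> = \<epsilon>1 * (\<epsilon>1 * p11 - 2 * i12 + p22 / \<epsilon>1)"
      using pos by (simp add: p11_def p22_def i12_def inner_diff_left inner_diff_right inner_commute[of u2 u1] field_simps)
    finally show ?thesis using pos by (simp add: zero_le_mult_iff)
  qed
  have hy2: "\<epsilon>2 * p11 + 2 * k12 + h2 / \<epsilon>2 \<ge> 0"
  proof -
    have "0 \<le> inner (\<epsilon>2 *\<^sub>R u1 + d2) (\<epsilon>2 *\<^sub>R u1 + d2)" by simp
    also have "\<dots> = \<epsilon>2 * (\<epsilon>2 * p11 + 2 * k12 + h2 / \<epsilon>2)"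
      using pos by (simp add: p11_def h2_def k12_def inner_add_left inner_add_right inner_commute[of d2 u1] field_simps)
    finally show ?thesis using pos by (simp add: zero_le_mult_iff)
  qed
  have hB1: "BB1 \<ge> h1 / (2 * L1)"
  proof -
    have "inner g1' (x1 - x1') = - inner u1 g1'" by (simp add: u1_def inner_diff_right inner_commute)
    moreover have "(norm (g1 - g1'))\<^sup>2 = h1" by (simp add: pn d1_def norm_minus_commute)
    ultimately show ?thesis using cc1 by (simp add: BB1_def)
  qed
  have hB2: "BB2 \<ge> h2 / (2 * L2)"
  proof -
    have "inner g2' (x2 - x2') = - inner u2 g2'" by (simp add: u2_def inner_diff_right inner_commute)
    moreover have "(norm (g2 - g2'))\<^sup>2 = h2" by (simp add: pn d2_def norm_minus_commute)
    ultimately show ?thesis using cc2 by (simp add: BB2_def)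
  qed
  define c1v where "c1v = \<alpha> * (2 - lam) / (2 * \<gamma>) - (1 - \<alpha>) * \<alpha> * \<epsilon>1 / (2 * \<gamma>) - (1 - \<alpha>) * L1 - \<alpha> * \<epsilon>2 / 2"
  define c2v where "c2v = (1 - \<alpha>) * (2 * \<alpha> - lam) / (2 * \<gamma>) - (1 - \<alpha>) * \<alpha> / (2 * \<gamma> * \<epsilon>1) - \<alpha> * L2"
  define K where "K = 2 + 2 * \<gamma>\<^sup>2 * L1\<^sup>2 + 4 * \<alpha>\<^sup>2 + 2 * \<gamma>\<^sup>2 * L2\<^sup>2"
  define c where "c = min c1v c2v"
  have cpos: "c > 0" using c1 c2 by (simp add: c_def c1v_def c2v_def)
  have Kpos: "K > 0" unfolding K_def by (simp add: add_pos_nonneg)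
  have main: "lam * LHS \<ge> c1v * p11 + c2v * p22"
    unfolding L2eq c1v_def c2v_def
    by (rule scalar_bound[OF pos g0 g1 hB1 hB2 h1 hj1 hj2' hj2 hy1 hy2])
  have pnn: "p11 \<ge> 0" "p22 \<ge> 0" by (simp_all add: pn)
  have "c1v * p11 + c2v * p22 \<ge> c * (p11 + p22)"
  proof -
    have "c * p11 \<le> c1v * p11" using pnn by (intro mult_right_mono) (auto simp: c_def)
    moreover have "c * p22 \<le> c2v * p22" using pnn by (intro mult_right_mono) (auto simp: c_def)
    ultimately show ?thesis by (simp add: algebra_simps)
  qed
  with main have main2: "lam * LHS \<ge> c * (p11 + p22)" by linarith
  define N where "N = (norm (z1' - z1))\<^sup>2 + (norm (z2' - z2))\<^sup>2"
  have NK: "N \<le> K * (p11 + p22)"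
  proof -
    have za: "z1' - z1 = u1 + \<gamma> *\<^sub>R d1" using lv1 zs by (simp add: v1_def)
    have zb: "z2' - z2 = \<alpha> *\<^sub>R (u2 - u1) + \<gamma> *\<^sub>R d2" using lv2 zs by (simp add: v2_def)
    have hd1: "h1 \<le> L1\<^sup>2 * p11"
      using nu1 by (simp add: pn power_mult_distrib[symmetric] power_mono)
    have hd2: "h2 \<le> L2\<^sup>2 * p22"
      using nu2 by (simp add: pn power_mult_distrib[symmetric] power_mono)
    have A: "(norm (z1' - z1))\<^sup>2 \<le> 2 * p11 + 2 * \<gamma>\<^sup>2 * h1"
      using norm_add_sq_le[of u1 "\<gamma> *\<^sub>R d1"] unfolding za by (simp add: pn power_mult_distrib)
    have Bb: "(norm (u2 - u1))\<^sup>2 \<le> 2 * p11 + 2 * p22"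
      using norm_add_sq_le[of u2 "- u1"] by (simp add: pn)
    have B: "(norm (z2' - z2))\<^sup>2 \<le> 2 * \<alpha>\<^sup>2 * (norm (u2 - u1))\<^sup>2 + 2 * \<gamma>\<^sup>2 * h2"
      using norm_add_sq_le[of "\<alpha> *\<^sub>R (u2 - u1)" "\<gamma> *\<^sub>R d2"] unfolding zb by (simp add: pn power_mult_distrib)
    have f1: "\<gamma>\<^sup>2 * h1 \<le> \<gamma>\<^sup>2 * (L1\<^sup>2 * p11)" using hd1 by (simp add: mult_left_mono)
    have f2: "\<gamma>\<^sup>2 * h2 \<le> \<gamma>\<^sup>2 * (L2\<^sup>2 * p22)" using hd2 by (simp add: mult_left_mono)
    have f3: "\<alpha>\<^sup>2 * (norm (u2 - u1))\<^sup>2 \<le> \<alpha>\<^sup>2 * (2 * p11 + 2 * p22)" using Bb by (simp add: mult_left_mono)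
    have f4: "0 \<le> \<gamma>\<^sup>2 * (L2\<^sup>2 * p11)" "0 \<le> \<gamma>\<^sup>2 * (L1\<^sup>2 * p22)" using pnn by simp_all
    have "N \<le> 2 * p11 + 2 * (\<gamma>\<^sup>2 * h1) + 2 * (\<gamma>\<^sup>2 * h2) + 2 * (\<alpha>\<^sup>2 * (norm (u2 - u1))\<^sup>2)"
      using A B unfolding N_def by (simp add: algebra_simps)
    also have "\<dots> \<le> 2 * p11 + 2 * (\<gamma>\<^sup>2 * (L1\<^sup>2 * p11)) + 2 * (\<gamma>\<^sup>2 * (L2\<^sup>2 * p22)) + 2 * (\<alpha>\<^sup>2 * (2 * p11 + 2 * p22))
       + 2 * p22 + 2 * (\<gamma>\<^sup>2 * (L2\<^sup>2 * p11)) + 2 * (\<gamma>\<^sup>2 * (L1\<^sup>2 * p22))"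
      using f1 f2 f3 f4 pnn by linarith
    also have "\<dots> = K * (p11 + p22)" unfolding K_def by (simp add: algebra_simps)
    finally show ?thesis .
  qed
  have "c / K * N \<le> c / K * (K * (p11 + p22))" using NK cpos Kpos by (intro mult_left_mono) auto
  also have "\<dots> = c * (p11 + p22)" using Kpos by simp
  also have "\<dots> \<le> lam * LHS" by (rule main2)
  finally have "c / K * N \<le> lam * LHS" .
  then have "c / (lam * K) * N \<le> LHS" using pos(1) Kpos by (simp add: field_simps)
  then show ?thesis unfolding LHS_def c_def c1v_def c2v_def K_def N_def .
qed



definition Qf :: "('a::real_inner \<Rightarrow> real) \<Rightarrow> ('a \<Rightarrow> 'a) \<Rightarrow> ('a \<Rightarrow> real) \<Rightarrow> ('a \<Rightarrow> 'a) \<Rightarrow> real \<Rightarrow> real \<Rightarrow> 'a \<Rightarrow> 'a \<Rightarrow> 'a \<Rightarrow> real" where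
  "Qf f1 g1 f2 g2 \<alpha> \<gamma> x1 x2 y = f1 x1 + inner (y - x1) (g1 x1) + (norm (y - x1))\<^sup>2 / (2 * (\<gamma> / \<alpha>))
     + (f2 x2 + inner (y - x2) (g2 x2) + (norm (y - x2))\<^sup>2 / (2 * (\<gamma> / (1 - \<alpha>))))"

lemma env_eq:
  "ryu_envelope f1 g1 f2 g2 f3 \<alpha> \<gamma> z1 z2 =
    (INF y. f3 y + ereal (Qf f1 g1 f2 g2 \<alpha> \<gamma> (prox f1 \<gamma> z1) (prox f2 (\<gamma> / \<alpha>) (z2 /\<^sub>R \<alpha> + prox f1 \<gamma> z1)) y))"
  by (simp add: ryu_envelope_def Qf_def Let_def add.assoc)

lemma env_shift:
  fixes x1 x2 z1 z2 y a1 a2 :: "'a::real_inner"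
  assumes g: "\<gamma> > 0" and a: "0 < \<alpha>" "\<alpha> < 1"
    and G1: "\<gamma> *\<^sub>R a1 = z1 - x1" and G2: "\<gamma> *\<^sub>R a2 = z2 + \<alpha> *\<^sub>R x1 - \<alpha> *\<^sub>R x2"
  shows "2 * \<gamma> * (F1 + inner (y - x1) a1 + (norm (y - x1))\<^sup>2 / (2 * (\<gamma> / \<alpha>))
     + (F2 + inner (y - x2) a2 + (norm (y - x2))\<^sup>2 / (2 * (\<gamma> / (1 - \<alpha>)))))
     - (norm (y - (x1 - z1 + x2 - z2)))\<^sup>2
   = 2 * \<gamma> * (F1 + F2) - 2 * \<gamma> * inner x1 a1 - 2 * \<gamma> * inner x2 a2 + \<alpha> * inner x1 x1 + (1 - \<alpha>) * inner x2 x2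
     - inner ((1 - \<alpha>) *\<^sub>R x2 + \<alpha> *\<^sub>R x1 - \<gamma> *\<^sub>R (a1 + a2)) ((1 - \<alpha>) *\<^sub>R x2 + \<alpha> *\<^sub>R x1 - \<gamma> *\<^sub>R (a1 + a2))"
proof -
  have w: "x1 - z1 + x2 - z2 = (1 - \<alpha>) *\<^sub>R x2 + \<alpha> *\<^sub>R x1 - \<gamma> *\<^sub>R (a1 + a2)"
  proof -
    have "z1 = x1 + \<gamma> *\<^sub>R a1" using G1 by (simp add: algebra_simps)
    moreover have "z2 = \<gamma> *\<^sub>R a2 - \<alpha> *\<^sub>R x1 + \<alpha> *\<^sub>R x2" using G2 by (simp add: algebra_simps)
    ultimately show ?thesis by (simp add: algebra_simps)
  qed
  show ?thesis unfolding w using g a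
    by (simp add: power2_norm_eq_inner inner_add_left inner_add_right inner_diff_left inner_diff_right
        field_simps inner_commute)
qed



theorem theorem1:
  fixes f1 f2 :: "'a::euclidean_space \<Rightarrow> real"
    and g1 g2 :: "'a \<Rightarrow> 'a"
    and f3 :: "'a \<Rightarrow> ereal"
    and L1 L2 lam \<alpha> \<gamma> \<epsilon>1 \<epsilon>2 :: real
  assumes conv1: "convex_on UNIV f1" and conv2: "convex_on UNIV f2"
    and grad1: "\<And>x. (f1 has_derivative (\<lambda>h. inner (g1 x) h)) (at x)"
    and grad2: "\<And>x. (f2 has_derivative (\<lambda>h. inner (g2 x) h)) (at x)"
    and L1_pos: "L1 > 0" and L2_pos: "L2 > 0"
    and lip1: "L1-lipschitz_on UNIV g1" and lip2: "L2-lipschitz_on UNIV g2"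
    and proper3: "proper_fun f3" and lsc3: "lsc_fun f3"
    and minimizer: "\<exists>x. \<forall>y. ereal (f1 x) + ereal (f2 x) + f3 x \<le> ereal (f1 y) + ereal (f2 y) + f3 y"
    and lam: "0 < lam" "lam < 2"
    and alpha: "(2 * lam - 3 + sqrt (9 - 4 * lam)) / 2 < \<alpha>" "\<alpha> < 1"
    and eps1: "\<alpha> / (2 * \<alpha> - lam) < \<epsilon>1" "\<epsilon>1 < (2 - lam) / (1 - \<alpha>)"
    and eps2: "\<alpha> * L2 / lam < \<epsilon>2"
    and gam: "\<gamma> \<in> ryu_Gamma lam \<alpha> L1 L2 \<epsilon>1 \<epsilon>2"
  shows "\<exists>M>0. \<forall>z1 z2 x1 x2 x3 :: nat \<Rightarrow> 'a.
           (\<forall>k. x1 k = prox f1 \<gamma> (z1 k)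
              \<and> x2 k = prox f2 (\<gamma> / \<alpha>) (z2 k /\<^sub>R \<alpha> + x1 k)
              \<and> x3 k \<in> prox_set f3 \<gamma> (x1 k - z1 k + x2 k - z2 k)
              \<and> z1 (Suc k) = z1 k + lam *\<^sub>R (x3 k - x1 k)
              \<and> z2 (Suc k) = z2 k + lam *\<^sub>R (x3 k - x2 k))
           \<longrightarrow> (\<forall>k. ryu_envelope f1 g1 f2 g2 f3 \<alpha> \<gamma> (z1 k) (z2 k)
                   \<ge> ryu_envelope f1 g1 f2 g2 f3 \<alpha> \<gamma> (z1 (Suc k)) (z2 (Suc k))
                     + ereal (M * ((norm (z1 (Suc k) - z1 k))\<^sup>2 + (norm (z2 (Suc k) - z2 k))\<^sup>2)))"
proof -
  have sq: "sqrt (9 - 4 * lam) \<ge> 3 - lam"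
    using lam by (intro real_le_rsqrt) (simp add: power2_eq_square algebra_simps)
  have "(2 * lam - 3 + sqrt (9 - 4 * lam)) / 2 \<ge> lam / 2" using sq by (simp add: field_simps)
  then have a2: "2 * \<alpha> > lam" using alpha(1) by linarith
  have apos: "\<alpha> > 0" using a2 lam by linarith
  have d2: "2 * \<alpha> - lam > 0" using a2 by linarith
  have e1pos: "\<epsilon>1 > 0" using eps1(1) apos d2 by (smt (verit) divide_pos_pos)
  have e2pos: "\<epsilon>2 > 0" using eps2 apos L2_pos lam by (smt (verit) divide_pos_pos mult_pos_pos)
  have oma: "1 - \<alpha> > 0" using alpha(2) by simp
  have gpos: "\<gamma> > 0" and gb0: "\<gamma> \<le> lam / (2 * L1)" and gb1: "\<gamma> \<le> lam / (2 * L2) - \<alpha> / (2 * \<epsilon>2)"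
    and gb2: "\<gamma> < \<alpha> * (2 - lam - (1 - \<alpha>) * \<epsilon>1) / (\<alpha> * \<epsilon>2 + 2 * (1 - \<alpha>) * L1)"
    and gb3: "\<gamma> < (1 - \<alpha>) * (\<epsilon>1 * (2 * \<alpha> - lam) - \<alpha>) / (2 * \<alpha> * L2 * \<epsilon>1)"
    using gam by (auto simp: ryu_Gamma_def Let_def)
  have A1: "2 - lam - (1 - \<alpha>) * \<epsilon>1 > 0" using eps1(2) oma by (simp add: field_simps)
  have A2: "\<epsilon>1 * (2 * \<alpha> - lam) - \<alpha> > 0" using eps1(1) d2 by (simp add: field_simps)
  define c1v where "c1v = \<alpha> * (2 - lam) / (2 * \<gamma>) - (1 - \<alpha>) * \<alpha> * \<epsilon>1 / (2 * \<gamma>) - (1 - \<alpha>) * L1 - \<alpha> * \<epsilon>2 / 2"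
  define c2v where "c2v = (1 - \<alpha>) * (2 * \<alpha> - lam) / (2 * \<gamma>) - (1 - \<alpha>) * \<alpha> / (2 * \<gamma> * \<epsilon>1) - \<alpha> * L2"
  have c1: "c1v > 0"
  proof -
    have D: "\<alpha> * \<epsilon>2 + 2 * (1 - \<alpha>) * L1 > 0" using apos e2pos oma L1_pos by (simp add: add_pos_pos)
    have "\<gamma> * (\<alpha> * \<epsilon>2 + 2 * (1 - \<alpha>) * L1) < \<alpha> * (2 - lam - (1 - \<alpha>) * \<epsilon>1)"
      using gb2 D by (simp add: field_simps)
    moreover have "c1v = (\<alpha> * (2 - lam - (1 - \<alpha>) * \<epsilon>1) - \<gamma> * (\<alpha> * \<epsilon>2 + 2 * (1 - \<alpha>) * L1)) / (2 * \<gamma>)"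
      unfolding c1v_def using gpos by (simp add: field_simps)
    ultimately show ?thesis using gpos by simp
  qed
  have c2: "c2v > 0"
  proof -
    have D: "2 * \<alpha> * L2 * \<epsilon>1 > 0" using apos L2_pos e1pos by simp
    have "\<gamma> * (2 * \<alpha> * L2 * \<epsilon>1) < (1 - \<alpha>) * (\<epsilon>1 * (2 * \<alpha> - lam) - \<alpha>)"
      using gb3 D by (simp add: field_simps)
    moreover have "c2v = ((1 - \<alpha>) * (\<epsilon>1 * (2 * \<alpha> - lam) - \<alpha>) - \<gamma> * (2 * \<alpha> * L2 * \<epsilon>1)) / (2 * \<gamma> * \<epsilon>1)"
      unfolding c2v_def using gpos e1pos by (simp add: field_simps)
    ultimately show ?thesis using gpos e1pos by simp
  qed
  define K where "K = 2 + 2 * \<gamma>\<^sup>2 * L1\<^sup>2 + 4 * \<alpha>\<^sup>2 + 2 * \<gamma>\<^sup>2 * L2\<^sup>2"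
  have Kpos: "K > 0" unfolding K_def by (simp add: add_pos_nonneg)
  define M where "M = min c1v c2v / (lam * K)"
  have Mpos: "M > 0" unfolding M_def using c1 c2 Kpos lam by simp
  show ?thesis
  proof (intro exI[of _ M] conjI Mpos allI impI)
    fix z1 z2 x1 x2 x3 :: "nat \<Rightarrow> 'a" and k :: nat
    assume H: "\<forall>k. x1 k = prox f1 \<gamma> (z1 k)
              \<and> x2 k = prox f2 (\<gamma> / \<alpha>) (z2 k /\<^sub>R \<alpha> + x1 k)
              \<and> x3 k \<in> prox_set f3 \<gamma> (x1 k - z1 k + x2 k - z2 k)
              \<and> z1 (Suc k) = z1 k + lam *\<^sub>R (x3 k - x1 k)
              \<and> z2 (Suc k) = z2 k + lam *\<^sub>R (x3 k - x2 k)"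
    have o1: "\<gamma> *\<^sub>R g1 (x1 j) = z1 j - x1 j" for j
      using H prox_eq[OF conv1 grad1 gpos, of "z1 j"] by metis
    have o2: "\<gamma> *\<^sub>R g2 (x2 j) = z2 j + \<alpha> *\<^sub>R x1 j - \<alpha> *\<^sub>R x2 j" for j
    proof -
      have "(\<gamma> / \<alpha>) *\<^sub>R g2 (x2 j) = (z2 j /\<^sub>R \<alpha> + x1 j) - x2 j"
        using H prox_eq[OF conv2 grad2, of "\<gamma> / \<alpha>" "z2 j /\<^sub>R \<alpha> + x1 j"] gpos apos by (metis divide_pos_pos)
      then have "\<alpha> *\<^sub>R ((\<gamma> / \<alpha>) *\<^sub>R g2 (x2 j)) = \<alpha> *\<^sub>R ((z2 j /\<^sub>R \<alpha> + x1 j) - x2 j)" by simp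
      then show ?thesis using apos by (simp add: algebra_simps)
    qed
    let ?Q = "\<lambda>j y. Qf f1 g1 f2 g2 \<alpha> \<gamma> (x1 j) (x2 j) y"
    have envj: "ryu_envelope f1 g1 f2 g2 f3 \<alpha> \<gamma> (z1 j) (z2 j) = (INF y. f3 y + ereal (?Q j y))" for j
      using H by (simp add: env_eq)
    have lowk: "ryu_envelope f1 g1 f2 g2 f3 \<alpha> \<gamma> (z1 k) (z2 k) \<ge> f3 (x3 k) + ereal (?Q k (x3 k))"
      unfolding envj
    proof (rule INF_greatest)
      fix y
      define w where "w = x1 k - z1 k + x2 k - z2 k"
      have mem: "f3 (x3 k) + ereal ((norm (x3 k - w))\<^sup>2 / (2 * \<gamma>)) \<le> f3 y + ereal ((norm (y - w))\<^sup>2 / (2 * \<gamma>))"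
        using H unfolding prox_set_def w_def by blast
      have sh: "2 * \<gamma> * ?Q k v - (norm (v - w))\<^sup>2 = 2 * \<gamma> * (f1 (x1 k) + f2 (x2 k)) - 2 * \<gamma> * inner (x1 k) (g1 (x1 k)) - 2 * \<gamma> * inner (x2 k) (g2 (x2 k)) + \<alpha> * inner (x1 k) (x1 k) + (1 - \<alpha>) * inner (x2 k) (x2 k)
     - inner ((1 - \<alpha>) *\<^sub>R x2 k + \<alpha> *\<^sub>R x1 k - \<gamma> *\<^sub>R (g1 (x1 k) + g2 (x2 k))) ((1 - \<alpha>) *\<^sub>R x2 k + \<alpha> *\<^sub>R x1 k - \<gamma> *\<^sub>R (g1 (x1 k) + g2 (x2 k)))" for v
        unfolding Qf_def w_def by (rule env_shift[OF gpos apos alpha(2) o1 o2])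
      define C where "C = ?Q k y - (norm (y - w))\<^sup>2 / (2 * \<gamma>)"
      have Cx: "?Q k v = (norm (v - w))\<^sup>2 / (2 * \<gamma>) + C" for v
      proof -
        have "2 * \<gamma> * ?Q k v - (norm (v - w))\<^sup>2 = 2 * \<gamma> * ?Q k y - (norm (y - w))\<^sup>2"
          using sh[of v] sh[of y] by simp
        then show ?thesis unfolding C_def using gpos by (simp add: field_simps)
      qed
      have "f3 (x3 k) + ereal (?Q k (x3 k)) = (f3 (x3 k) + ereal ((norm (x3 k - w))\<^sup>2 / (2 * \<gamma>))) + ereal C"
        by (simp add: Cx[of "x3 k"] add.assoc)
      also have "\<dots> \<le> (f3 y + ereal ((norm (y - w))\<^sup>2 / (2 * \<gamma>))) + ereal C"
        using mem by (rule add_right_mono)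
      also have "\<dots> = f3 y + ereal (?Q k y)"
        by (simp add: Cx[of y] add.assoc)
      finally show "f3 (x3 k) + ereal (?Q k (x3 k)) \<le> f3 y + ereal (?Q k y)" .
    qed
    have upk: "ryu_envelope f1 g1 f2 g2 f3 \<alpha> \<gamma> (z1 (Suc k)) (z2 (Suc k)) \<le> f3 (x3 k) + ereal (?Q (Suc k) (x3 k))"
      unfolding envj by (rule INF_lower) simp
    have zs: "z1 (Suc k) = z1 k + lam *\<^sub>R (x3 k - x1 k)" "z2 (Suc k) = z2 k + lam *\<^sub>R (x3 k - x2 k)"
      using H by blast+
    have kk: "?Q k (x3 k) - ?Q (Suc k) (x3 k) \<ge> M * ((norm (z1 (Suc k) - z1 k))\<^sup>2 + (norm (z2 (Suc k) - z2 k))\<^sup>2)"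
      unfolding Qf_def M_def c1v_def c2v_def K_def
      by (rule key[OF lam(1) gpos apos alpha(2) e1pos e2pos L1_pos L2_pos gb0 gb1 c1[unfolded c1v_def] c2[unfolded c2v_def]
            o1 o1 o2 o2 zs cocoercive[OF conv1 grad1 lip1 L1_pos] cocoercive[OF conv2 grad2 lip2 L2_pos]])
         (auto intro: monotone_grad[OF conv2 grad2] simp: lipschitz_onD[OF lip1, simplified dist_norm] lipschitz_onD[OF lip2, simplified dist_norm] dist_norm)
    have "ryu_envelope f1 g1 f2 g2 f3 \<alpha> \<gamma> (z1 (Suc k)) (z2 (Suc k))
            + ereal (M * ((norm (z1 (Suc k) - z1 k))\<^sup>2 + (norm (z2 (Suc k) - z2 k))\<^sup>2))
          \<le> f3 (x3 k) + ereal (?Q (Suc k) (x3 k)) + ereal (M * ((norm (z1 (Suc k) - z1 k))\<^sup>2 + (norm (z2 (Suc k) - z2 k))\<^sup>2))"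
      using upk by (rule add_right_mono)
    also have "\<dots> = f3 (x3 k) + ereal (?Q (Suc k) (x3 k) + M * ((norm (z1 (Suc k) - z1 k))\<^sup>2 + (norm (z2 (Suc k) - z2 k))\<^sup>2))"
      by (simp add: add.assoc)
    also have "\<dots> \<le> f3 (x3 k) + ereal (?Q k (x3 k))"
      using kk by (intro add_left_mono) simp
    also have "\<dots> \<le> ryu_envelope f1 g1 f2 g2 f3 \<alpha> \<gamma> (z1 k) (z2 k)" by (rule lowk)
    finally show "ryu_envelope f1 g1 f2 g2 f3 \<alpha> \<gamma> (z1 (Suc k)) (z2 (Suc k))
            + ereal (M * ((norm (z1 (Suc k) - z1 k))\<^sup>2 + (norm (z2 (Suc k) - z2 k))\<^sup>2))
          \<le> ryu_envelope f1 g1 f2 g2 f3 \<alpha> \<gamma> (z1 k) (z2 k)" .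
  qed
qed

end
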